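(* Let $0<p<1$ and let $G$ be a simple graph with $m$ edges. Then $\mathcal{E}_p(G) \geq 2m^{p/2}$.
   Context: For a graph $G$ with adjacency eigenvalues $\lambda_1,\dots,\lambda_n$ and $p>0$, the $p$-energy is $\mathcal{E}_p(G) = \sum_{i=1}^n |\lambda_i|^p$. *)

theory Defs
  imports "Jordan_Normal_Form.Determinant" "Jordan_Normal_Form.Char_Poly" "HOL-Computational_Algebra.Polynomial"
begin

definition simple_graph :: "nat \<Rightarrow> (nat \<Rightarrow> nat \<Rightarrow> bool) \<Rightarrow> bool" where
  "simple_graph n E \<longleftrightarrow> (\<forall>i<n. \<forall>j<n. E i j \<longleftrightarrow> E j i) \<and> (\<forall>i<n. \<not> E i i)"

text \<open>Edge set: unordered pairs, represented as (i,j) with i<j.\<close>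
definition edges :: "nat \<Rightarrow> (nat \<Rightarrow> nat \<Rightarrow> bool) \<Rightarrow> (nat \<times> nat) set" where
  "edges n E = {(i, j). i < j \<and> j < n \<and> E i j}"

definition adj_matrix :: "nat \<Rightarrow> (nat \<Rightarrow> nat \<Rightarrow> bool) \<Rightarrow> real mat" where
  "adj_matrix n E = mat n n (\<lambda>(i, j). if E i j then 1 else 0)"

definition adj_eigenvalues :: "nat \<Rightarrow> (nat \<Rightarrow> nat \<Rightarrow> bool) \<Rightarrow> complex multiset" where
  "adj_eigenvalues n E = proots (char_poly (map_mat complex_of_real (adj_matrix n E)))"

definition p_energy :: "real \<Rightarrow> nat \<Rightarrow> (nat \<Rightarrow> nat \<Rightarrow> bool) \<Rightarrow> real" where
  "p_energy p n E = (\<Sum>\<mu>\<in>#adj_eigenvalues n E. cmod \<mu> powr p)"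

end

theory Submission
  imports Defs "Jordan_Normal_Form.Schur_Decomposition"
begin


lemma powr_key:
  fixes t x q :: real
  assumes "0 \<le> t" "t \<le> x" "q \<le> 0" "0 < x"
  shows "t powr (q + 0) \<ge> 0"
  using assms by simp

lemma term_bound:
  fixes t x a b :: real
  assumes "0 \<le> t" "t \<le> x" "0 < x" "a - b \<le> 0"  "0 < b"
  shows "t powr a \<ge> t powr b * x powr (a - b)"
proof (cases "t = 0")
  case True thus ?thesis using assms by simp
next
  case False
  hence tp: "0 < t" using assms by simp
  have "t powr a = t powr b * t powr (a - b)" by (simp add: powr_add[symmetric])
  moreover have "x powr (a - b) \<le> t powr (a - b)"
    using powr_mono2'[OF assms(4) tp assms(2)] .
  ultimately show ?thesis using tp by (simp add: mult_left_mono)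
qed

lemma abstract_energy:
  fixes f :: "'i \<Rightarrow> complex" and I :: "'i set" and m p :: real
  assumes fin: "finite I" and s1: "(\<Sum>i\<in>I. f i) = 0" and s2: "(\<Sum>i\<in>I. (f i)^2) = of_real (2*m)"
    and p: "0 < p" "p < 1" and m: "0 \<le> m"
  shows "(\<Sum>i\<in>I. cmod (f i) powr p) \<ge> 2 * m powr (p/2)"
proof (cases "m = 0")
  case True
  thus ?thesis using p by (simp add: sum_nonneg)
next
  case False
  hence mpos: "m > 0" using m by simp
  have pp: "p \<le> 2" "p \<le> 1" using p by auto
  have sq: "(\<Sum>i\<in>I. cmod (f i) ^ 2) \<ge> 2 * m"
  proof -
    have "2 * m = cmod (\<Sum>i\<in>I. (f i)^2)" using s2 mpos by simp
    also have "\<dots> \<le> (\<Sum>i\<in>I. cmod ((f i)^2))" by (rule norm_sum)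
    finally show ?thesis by (simp add: norm_power)
  qed
  have Ine: "I \<noteq> {}" using sq mpos by auto
  define x where "x = Max ((\<lambda>i. cmod (f i)) ` I)"
  have xge: "\<And>i. i \<in> I \<Longrightarrow> cmod (f i) \<le> x" unfolding x_def using fin by auto
  have "x \<in> (\<lambda>i. cmod (f i)) ` I" unfolding x_def using fin Ine by (intro Max_in) auto
  then obtain j where j: "j \<in> I" "cmod (f j) = x" by auto
  have xpos: "x > 0"
  proof (rule ccontr)
    assume "\<not> x > 0"
    hence "\<And>i. i \<in> I \<Longrightarrow> cmod (f i) = 0" using xge by (meson norm_ge_zero order.antisym not_less order.trans)
    hence "(\<Sum>i\<in>I. cmod (f i) ^ 2) = 0" by simp
    thus False using sq mpos by simp
  qed
  have b1: "(\<Sum>i\<in>I. cmod (f i) powr p) \<ge> 2 * m * x powr (p - 2)"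
  proof -
    have "2 * m * x powr (p - 2) \<le> (\<Sum>i\<in>I. cmod (f i) ^ 2) * x powr (p - 2)"
      using sq by (simp add: mult_right_mono)
    also have "\<dots> = (\<Sum>i\<in>I. cmod (f i) powr 2 * x powr (p - 2))"
      by (simp add: sum_distrib_right)
    also have "\<dots> \<le> (\<Sum>i\<in>I. cmod (f i) powr p)"
      by (rule sum_mono, rule term_bound, auto simp: xge xpos p pp)
    finally show ?thesis .
  qed
  have b2: "(\<Sum>i\<in>I. cmod (f i) powr p) \<ge> 2 * x powr p"
  proof -
    have fj: "f j = - (\<Sum>i\<in>I-{j}. f i)" using s1 sum.remove[OF fin j(1), of f] by (simp add: add_eq_0_iff)
    have "x \<le> (\<Sum>i\<in>I-{j}. cmod (f i))"
      using j(2) fj norm_sum[of f "I-{j}"] by simp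
    hence e2: "x * x powr (p - 1) \<le> (\<Sum>i\<in>I-{j}. cmod (f i)) * x powr (p - 1)"
      by (rule mult_right_mono) auto
    have "x powr p = x * x powr (p - 1)" using powr_mult_base[of x "p - 1"] xpos by simp
    also note e2
    also have "(\<Sum>i\<in>I-{j}. cmod (f i)) * x powr (p - 1) = (\<Sum>i\<in>I-{j}. cmod (f i) powr 1 * x powr (p - 1))"
      by (simp add: sum_distrib_right)
    also have "\<dots> \<le> (\<Sum>i\<in>I-{j}. cmod (f i) powr p)"
      by (rule sum_mono, rule term_bound, auto simp: xge xpos p pp)
    finally have "x powr p \<le> (\<Sum>i\<in>I-{j}. cmod (f i) powr p)" .
    moreover have "(\<Sum>i\<in>I. cmod (f i) powr p) = cmod (f j) powr p + (\<Sum>i\<in>I-{j}. cmod (f i) powr p)"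
      using sum.remove[OF fin j(1)] by blast
    ultimately show ?thesis using j(2) by simp
  qed
  have x2: "x^2 = x powr 2" using powr_realpow[OF xpos, of 2] by simp
  show ?thesis
  proof (cases "x^2 \<ge> m")
    case True
    have "m powr (p/2) \<le> (x^2) powr (p/2)" using True mpos p by (intro powr_mono2) auto
    also have "\<dots> = x powr p" unfolding x2 powr_powr by simp
    finally show ?thesis using b2 by linarith
  next
    case False
    have "m powr ((p-2)/2) \<le> (x^2) powr ((p-2)/2)" using False xpos p by (intro powr_mono2') auto
    also have "\<dots> = x powr (p - 2)" unfolding x2 powr_powr by (rule arg_cong[where f="\<lambda>e. x powr e"]) simp
    finally have "m * m powr ((p-2)/2) \<le> m * x powr (p - 2)" using mpos by simp
    moreover have "m * m powr ((p-2)/2) = m powr (p/2)"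
      using powr_mult_base[of m "(p-2)/2"] mpos by (simp add: diff_divide_distrib)
    ultimately show ?thesis using b1 by linarith
  qed
qed


definition mtr :: "'a::comm_ring_1 mat \<Rightarrow> nat \<Rightarrow> 'a" where
  "mtr M n = (\<Sum>i<n. M $$ (i,i))"

lemma mult_entry:
  assumes "X \<in> carrier_mat n n" "Y \<in> carrier_mat n n" "i < n" "j < n"
  shows "(X * Y) $$ (i,j) = (\<Sum>k<n. X $$ (i,k) * Y $$ (k,j))"
  using assms by (simp add: index_mult_mat scalar_prod_def lessThan_atLeast0)

lemma mtr_comm:
  assumes X: "X \<in> carrier_mat n n" and Y: "Y \<in> carrier_mat n n"
  shows "mtr (X * Y) n = mtr (Y * X) n"
proof -
  have "mtr (X * Y) n = (\<Sum>i<n. \<Sum>k<n. X $$ (i,k) * Y $$ (k,i))"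
    unfolding mtr_def using mult_entry[OF X Y] by simp
  also have "\<dots> = (\<Sum>k<n. \<Sum>i<n. Y $$ (k,i) * X $$ (i,k))"
    by (subst sum.swap) (simp add: mult.commute)
  also have "\<dots> = mtr (Y * X) n"
    unfolding mtr_def using mult_entry[OF Y X] by simp
  finally show ?thesis .
qed

lemma mtr_sim:
  assumes P: "P \<in> carrier_mat n n" and B: "B \<in> carrier_mat n n" and Q: "Q \<in> carrier_mat n n"
    and QP: "Q * P = 1\<^sub>m n"
  shows "mtr (P * B * Q) n = mtr B n"
proof -
  have "mtr (P * B * Q) n = mtr (Q * (P * B)) n"
    by (rule mtr_comm) (use P B Q in auto)
  also have "Q * (P * B) = (Q * P) * B" using P B Q by (simp add: assoc_mult_mat)
  also have "\<dots> = B" using QP B by simp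
  finally show ?thesis .
qed

lemma upper_sq_diag:
  fixes B :: "'a::comm_ring_1 mat"
  assumes B: "B \<in> carrier_mat n n" and U: "upper_triangular B" and i: "i < n"
  shows "(B * B) $$ (i,i) = (B $$ (i,i))^2"
proof -
  have "(B * B) $$ (i,i) = (\<Sum>k<n. B $$ (i,k) * B $$ (k,i))" using mult_entry[OF B B i i] .
  also have "\<dots> = B $$ (i,i) * B $$ (i,i) + (\<Sum>k\<in>{..<n}-{i}. B $$ (i,k) * B $$ (k,i))"
    using i by (subst sum.remove[of _ i]) auto
  also have "(\<Sum>k\<in>{..<n}-{i}. B $$ (i,k) * B $$ (k,i)) = 0"
  proof (rule sum.neutral, rule ballI)
    fix k assume k: "k \<in> {..<n}-{i}"
    show "B $$ (i,k) * B $$ (k,i) = 0"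
    proof (cases "k < i")
      case True thus ?thesis using U B i unfolding upper_triangular_def by auto
    next
      case False hence "i < k" using k by auto
      thus ?thesis using U B k unfolding upper_triangular_def by auto
    qed
  qed
  finally show ?thesis by (simp add: power2_eq_square)
qed

lemma proots_linprod: "proots (\<Prod>a\<leftarrow>as. [:- a, 1:]) = mset (as :: complex list)"
proof (induction as)
  case Nil thus ?case by simp
next
  case (Cons a as)
  have nz: "(\<Prod>a\<leftarrow>as. [:- a, 1:]) \<noteq> (0 :: complex poly)"
    by (auto simp: prod_list_zero_iff)
  have "proots (\<Prod>a\<leftarrow>a#as. [:- a, 1:]) = proots ([:- a, 1:] * (\<Prod>a\<leftarrow>as. [:- a, 1:]))"
    by (simp only: list.map prod_list.Cons)
  also have "\<dots> = proots [:- a, 1:] + proots (\<Prod>a\<leftarrow>as. [:- a, 1:])"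
    by (rule proots_mult) (use nz in auto)
  also have "\<dots> = {#a#} + mset as" using Cons.IH proots_linear_factor[of "-a"] by simp
  finally show ?case by simp
qed

lemma count_pairs:
  assumes G: "simple_graph n E"
  shows "card {(i,k). i < n \<and> k < n \<and> E i k} = 2 * card (edges n E)"
proof -
  let ?S = "{(i,k). i < n \<and> k < n \<and> E i k}"
  have fin: "finite (edges n E)"
    by (rule finite_subset[of _ "{..<n} \<times> {..<n}"]) (auto simp: edges_def)
  have eq: "?S = edges n E \<union> prod.swap ` edges n E"
  proof (intro equalityI subsetI)
    fix x assume "x \<in> ?S"
    then obtain i k where x: "x = (i,k)" "i < n" "k < n" "E i k" by auto
    have "i \<noteq> k" using G x unfolding simple_graph_def by auto
    show "x \<in> edges n E \<union> prod.swap ` edges n E"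
    proof (cases "i < k")
      case True thus ?thesis using x by (auto simp: edges_def)
    next
      case False
      hence "(k,i) \<in> edges n E" using x \<open>i \<noteq> k\<close> G unfolding edges_def simple_graph_def by auto
      moreover have "(i,k) = prod.swap (k,i)" by simp
      ultimately show ?thesis using x by blast
    qed
  next
    fix x assume "x \<in> edges n E \<union> prod.swap ` edges n E"
    thus "x \<in> ?S" using G unfolding edges_def simple_graph_def by auto
  qed
  have disj: "edges n E \<inter> prod.swap ` edges n E = {}" unfolding edges_def by auto
  have "card ?S = card (edges n E) + card (prod.swap ` edges n E)"
    unfolding eq using fin disj by (intro card_Un_disjoint) auto
  also have "card (prod.swap ` edges n E) = card (edges n E)"
    by (rule card_image) simp
  finally show ?thesis by simp
qed


lemma pow2_mat: "M \<in> carrier_mat n n \<Longrightarrow> M ^\<^sub>m 2 = M * M"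
  by (simp add: numeral_2_eq_2)

theorem proposition5p3:
  fixes p :: real and n :: nat and E :: "nat \<Rightarrow> nat \<Rightarrow> bool"
  assumes "0 < p" and "p < 1"
    and "simple_graph n E"
  shows "p_energy p n E \<ge> 2 * real (card (edges n E)) powr (p / 2)"
proof -
  define A where "A = map_mat complex_of_real (adj_matrix n E)"
  have Ac: "A \<in> carrier_mat n n" unfolding A_def adj_matrix_def by simp
  have Aent: "\<And>i k. i < n \<Longrightarrow> k < n \<Longrightarrow> A $$ (i,k) = (if E i k then 1 else 0)"
    unfolding A_def adj_matrix_def by simp
  obtain as where cA: "char_poly A = (\<Prod>a\<leftarrow>as. [:- a, 1:])" and len: "length as = n"
    using char_poly_factorized[OF Ac] by auto
  obtain B P Q where sd: "schur_decomposition A as = (B,P,Q)"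
    by (cases "schur_decomposition A as") auto
  from schur_decomposition[OF Ac cA sd]
  have sim: "similar_mat_wit A B P Q" and U: "upper_triangular B" and dg: "diag_mat B = as" by auto
  note w = similar_mat_witD2[OF Ac sim]
  have Bii: "\<And>i. i < n \<Longrightarrow> B $$ (i,i) = as ! i"
    using dg w(5) unfolding diag_mat_def by auto
  have s1: "(\<Sum>i<n. as ! i) = 0"
  proof -
    have "(\<Sum>i<n. as ! i) = mtr B n" unfolding mtr_def using Bii by simp
    also have "\<dots> = mtr A n" using mtr_sim[OF w(6) w(5) w(7) w(2)] w(3) by simp
    also have "\<dots> = 0" unfolding mtr_def using Aent assms(3) unfolding simple_graph_def by simp
    finally show ?thesis .
  qed
  have s2: "(\<Sum>i<n. (as ! i)^2) = of_real (2 * real (card (edges n E)))"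
  proof -
    have "(\<Sum>i<n. (as ! i)^2) = mtr (B * B) n" unfolding mtr_def
      using Bii upper_sq_diag[OF w(5) U] by simp
    also have "\<dots> = mtr (P * (B * B) * Q) n"
      using mtr_sim[OF w(6) _ w(7) w(2), of "B * B"] w(5) by simp
    also have "P * (B * B) * Q = A * A"
      using similar_mat_wit_pow_id[OF sim, of 2] pow2_mat[OF w(5)] pow2_mat[OF Ac] by simp
    also have "mtr (A * A) n = (\<Sum>i<n. \<Sum>k<n. A $$ (i,k) * A $$ (k,i))"
      unfolding mtr_def using mult_entry[OF Ac Ac] by simp
    also have "\<dots> = (\<Sum>i<n. \<Sum>k<n. if E i k then 1 else 0)"
      using Aent assms(3) unfolding simple_graph_def by (intro sum.cong refl) auto
    also have "\<dots> = (\<Sum>z\<in>{..<n} \<times> {..<n}. if (case z of (i,k) \<Rightarrow> E i k) then 1 else 0)"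
      unfolding sum.cartesian_product by (rule sum.cong) (auto simp: case_prod_beta)
    also have "\<dots> = (\<Sum>z\<in>{z\<in>{..<n} \<times> {..<n}. case z of (i,k) \<Rightarrow> E i k}. 1)"
      by (rule sum.inter_filter[symmetric]) simp
    also have "{z\<in>{..<n} \<times> {..<n}. case z of (i,k) \<Rightarrow> E i k} = {(i,k). i < n \<and> k < n \<and> E i k}"
      by auto
    also have "(\<Sum>z\<in>{(i,k). i < n \<and> k < n \<and> E i k}. (1::complex)) = of_nat (2 * card (edges n E))"
      using count_pairs[OF assms(3)] by simp
    finally show ?thesis by simp
  qed
  have "p_energy p n E = (\<Sum>i<n. cmod (as ! i) powr p)"
  proof -
    have "p_energy p n E = (\<Sum>\<mu>\<in>#mset as. cmod \<mu> powr p)"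
      unfolding p_energy_def adj_eigenvalues_def A_def[symmetric] cA proots_linprod ..
    also have "\<dots> = sum_list (map (\<lambda>\<mu>. cmod \<mu> powr p) as)"
      by (metis mset_map sum_mset_sum_list)
    also have "\<dots> = (\<Sum>i<n. cmod (as ! i) powr p)"
      by (simp add: sum_list_sum_nth len lessThan_atLeast0)
    finally show ?thesis .
  qed
  moreover have "(\<Sum>i<n. cmod (as ! i) powr p) \<ge> 2 * real (card (edges n E)) powr (p / 2)"
    by (rule abstract_energy[OF _ s1 s2 assms(1,2)]) auto
  ultimately show ?thesis by linarith
qed

end
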